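(* Let $d>7$ be a positive integer with $\gcd(d,105)=1$, and let $n$ be a positive integer. Then the number of primes in the set $\{d+1,\,2d+1,\,3d+1,\,\ldots,\,nd+1\}$ is at most $0.46n+7$. *)

theory Defs
  imports Complex_Main "HOL-Computational_Algebra.Primes"
begin

end

theory Submission
  imports Defs "HOL-Number_Theory.Cong"
begin

lemma residue_shift:
  fixes d m :: nat
  assumes "coprime d m" "m > 0"
  obtains s where "s < m" "\<And>k. m dvd k*d+1 \<longleftrightarrow> m dvd k+s"
proof -
  obtain e where e: "[d * e = Suc 0] (mod m)" using cong_solve_coprime_nat[OF assms(1)] by blast
  have "m dvd k*d+1 \<longleftrightarrow> m dvd k+e" for k
  proof
    assume "m dvd k*d+1"
    then have "m dvd (k*d+1)*e" by (rule dvd_mult2)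
    moreover have "[(k*d+1)*e = k + e] (mod m)"
    proof -
      have "[(k*d+1)*e = k*(d*e) + e] (mod m)" by (simp add: algebra_simps)
      moreover have "[k*(d*e) + e = k*1 + e] (mod m)"
        using e by (intro cong_add cong_mult) auto
      ultimately show ?thesis by (metis cong_trans mult_1_right)
    qed
    ultimately show "m dvd k+e" by (metis cong_dvd_iff)
  next
    assume "m dvd k+e"
    then have "m dvd (k+e)*d" by (rule dvd_mult2)
    moreover have "[(k+e)*d = k*d + 1] (mod m)"
    proof -
      have "[(k+e)*d = k*d + d*e] (mod m)" by (simp add: algebra_simps)
      moreover have "[k*d + d*e = k*d + 1] (mod m)"
        using e by (intro cong_add) auto
      ultimately show ?thesis by (metis cong_trans)
    qed
    ultimately show "m dvd k*d+1" by (metis cong_dvd_iff)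
  qed
  moreover have "m dvd k+e \<longleftrightarrow> m dvd k + e mod m" for k
    by (metis mod_add_right_eq dvd_eq_mod_eq_0)
  ultimately show ?thesis using that[of "e mod m"] assms(2) by simp
qed

lemma count_shift:
  fixes m s n :: nat
  assumes "m > 0" "s < m"
  shows "card {k\<in>{1..n}. m dvd k+s} = (n+s) div m"
proof (induction n)
  case 0
  then show ?case using assms by simp
next
  case (Suc n)
  have eq: "{k\<in>{1..Suc n}. m dvd k+s} = {k\<in>{1..n}. m dvd k+s} \<union> (if m dvd Suc n + s then {Suc n} else {})"
    by (auto simp: le_Suc_eq)
  have "(Suc n + s) div m = (n+s) div m + (if m dvd Suc n + s then 1 else 0)"
    using div_Suc[of "n+s" m] by (auto simp: dvd_eq_mod_eq_0)
  show ?case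
  proof (cases "m dvd Suc n + s")
    case True
    have "card ({k\<in>{1..n}. m dvd k+s} \<union> {Suc n}) = Suc (card {k\<in>{1..n}. m dvd k+s})"
      by (subst card_Un_disjoint) auto
    then show ?thesis using Suc True \<open>(Suc n + s) div m = _\<close> by (simp only: eq if_True)
  next
    case False
    then show ?thesis using Suc \<open>(Suc n + s) div m = _\<close> by (simp only: eq if_False) simp
  qed
qed

lemma count_bounds:
  fixes d m n :: nat
  assumes "coprime d m" "m > 0"
  shows "real n / m - 1 \<le> real (card {k\<in>{1..n}. m dvd k*d+1})"
    and "real (card {k\<in>{1..n}. m dvd k*d+1}) \<le> real n / m + 1"
proof -
  obtain s where s: "s < m" "\<And>k. m dvd k*d+1 \<longleftrightarrow> m dvd k+s"
    using residue_shift[OF assms] by blast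
  define c where "c = (n+s) div m"
  have cc: "card {k\<in>{1..n}. m dvd k*d+1} = c"
    using count_shift[OF assms(2) s(1), of n] s(2) by (simp add: c_def)
  have d1: "m * c \<le> n + s" unfolding c_def by simp
  have d2: "n + s < m * c + m" unfolding c_def
    by (metis add_less_cancel_left assms(2) div_mult_mod_eq mod_less_divisor mult.commute)
  have r1: "real m * real c \<le> real n + real m" using d1 s(1) by (metis of_nat_add of_nat_le_iff of_nat_mult add_left_mono le_trans less_imp_le)
  have r2: "real n < real m * real c + real m" using d2 by (metis of_nat_add of_nat_less_iff of_nat_mult le_add1 le_less_trans)
  have mp: "real m > 0" using assms by simp
  show "real n / m - 1 \<le> real (card {k\<in>{1..n}. m dvd k*d+1})"
    unfolding cc using r2 mp by (simp add: field_simps)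
  show "real (card {k\<in>{1..n}. m dvd k*d+1}) \<le> real n / m + 1"
    unfolding cc using r1 mp by (simp add: field_simps)
qed


lemma cop105:
  fixes d m :: nat
  assumes "gcd d 105 = 1" "m dvd 105"
  shows "coprime d m"
  using assms by (metis coprime_iff_gcd_eq_1 coprime_mult_right_iff dvd_def)

theorem lemma5p2:
  fixes d n :: nat
  assumes "d > 7" and "gcd d 105 = 1" and "n > 0"
  shows "real (card {p. prime p \<and> p \<in> (\<lambda>k. k * d + 1) ` {1..n}}) \<le> 0.46 * real n + 7"
proof -
  define S where "S m = {k\<in>{1..n}. m dvd k*d+1}" for m :: nat
  define A where "A = S 3"
  define B where "B = S 5"
  define C where "C = S 7"
  have fin: "finite (S m)" for m unfolding S_def by simp
  have AB: "A \<inter> B = S 15" unfolding A_def B_def S_def by auto presburger+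
  have AC: "A \<inter> C = S 21" unfolding A_def C_def S_def by auto presburger+
  have BC: "B \<inter> C = S 35" unfolding B_def C_def S_def by auto presburger+
  have ABC: "A \<inter> B \<inter> C = S 105" unfolding A_def B_def C_def S_def by auto presburger+
  have lo: "real n / m - 1 \<le> real (card (S m))" and hi: "real (card (S m)) \<le> real n / m + 1"
    if "m dvd 105" "m > 0" for m
    using count_bounds[OF cop105[OF assms(2) that(1)] that(2)] unfolding S_def by auto
  have finA: "finite A" "finite B" "finite C" unfolding A_def B_def C_def using fin by auto
  have e1: "card (A\<union>B) + card C = card (A\<union>B\<union>C) + card ((A\<union>B)\<inter>C)"
    using finA by (intro card_Un_Int) auto
  have e2: "card A + card B = card (A\<union>B) + card (A\<inter>B)"
    using finA by (intro card_Un_Int) auto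
  have e3: "card (A\<inter>C) + card (B\<inter>C) = card ((A\<inter>C)\<union>(B\<inter>C)) + card ((A\<inter>C)\<inter>(B\<inter>C))"
    using finA by (intro card_Un_Int) auto
  have s1: "(A\<union>B)\<inter>C = (A\<inter>C)\<union>(B\<inter>C)" by auto
  have s2: "(A\<inter>C)\<inter>(B\<inter>C) = A \<inter> B \<inter> C" by auto
  define G where "G = {1..n} - (A\<union>B\<union>C)"
  have sub: "A\<union>B\<union>C \<subseteq> {1..n}" unfolding A_def B_def C_def S_def by auto
  have cG: "card G + card (A\<union>B\<union>C) = n"
    unfolding G_def using card_Diff_subset[OF _ sub] card_mono[OF _ sub] using finA by simp
  have psub: "{p. prime p \<and> p \<in> (\<lambda>k. k * d + 1) ` {1..n}} \<subseteq> (\<lambda>k. k * d + 1) ` G"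
  proof
    fix p assume "p \<in> {p. prime p \<and> p \<in> (\<lambda>k. k * d + 1) ` {1..n}}"
    then obtain k where p: "prime p" "p = k*d+1" "k \<in> {1..n}" by auto
    have big: "p > 7" using p assms(1)
      by (metis atLeastAtMost_iff le_add1 le_trans less_le_trans mult_le_mono1 mult_1 less_add_one le_less_trans)
    have "\<not> q dvd p" if "q \<in> {3,5,7}" for q :: nat
    proof
      assume "q dvd p"
      with p(1) have "q = 1 \<or> q = p" by (simp add: prime_nat_iff)
      with that big show False by auto
    qed
    then have "k \<notin> A\<union>B\<union>C" using p unfolding A_def B_def C_def S_def by auto
    then show "p \<in> (\<lambda>k. k * d + 1) ` G" using p unfolding G_def by auto
  qed
  have "card {p. prime p \<and> p \<in> (\<lambda>k. k * d + 1) ` {1..n}} \<le> card ((\<lambda>k. k * d + 1) ` G)"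
    by (rule card_mono[OF _ psub]) (simp add: G_def)
  also have "\<dots> \<le> card G" by (rule card_image_le) (simp add: G_def)
  finally have main: "real (card {p. prime p \<and> p \<in> (\<lambda>k. k * d + 1) ` {1..n}}) \<le> real (card G)" by simp
  have l3: "real n / 3 - 1 \<le> card A" unfolding A_def using lo[of 3] by simp
  have l5: "real n / 5 - 1 \<le> card B" unfolding B_def using lo[of 5] by simp
  have l7: "real n / 7 - 1 \<le> card C" unfolding C_def using lo[of 7] by simp
  have l105: "real n / 105 - 1 \<le> card (A\<inter>B\<inter>C)" unfolding ABC using lo[of 105] by simp
  have h15: "card (A\<inter>B) \<le> real n / 15 + 1" unfolding AB using hi[of 15] by simp
  have h21: "card (A\<inter>C) \<le> real n / 21 + 1" unfolding AC using hi[of 21] by simp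
  have h35: "card (B\<inter>C) \<le> real n / 35 + 1" unfolding BC using hi[of 35] by simp
  have r1: "real (card (A\<union>B)) + card C = card (A\<union>B\<union>C) + card (A\<inter>C) + card (B\<inter>C) - card (A\<inter>B\<inter>C)"
    using e1 e3 unfolding s1 s2 by linarith
  have r2: "real (card A) + card B = card (A\<union>B) + card (A\<inter>B)" using e2 by linarith
  have r3: "real (card G) + card (A\<union>B\<union>C) = n" using cG by linarith
  have "real (card G) \<le> 48 * real n / 105 + 7"
    using l3 l5 l7 l105 h15 h21 h35 r1 r2 r3 by linarith
  also have "\<dots> \<le> 0.46 * real n + 7" by simp
  finally show ?thesis using main by linarith
qed

end
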